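(* Let $\mathcal{Z}$ be a finite pretraining dataset with $|\mathcal{Z}|=m$ and $\mathcal{X}$ a finite finetuning dataset with $|\mathcal{X}|=n$. Let $g(z,W,U)$ be a pretraining loss and $f(x,W,\Theta)$ a finetuning loss, where $W\in\mathbb{R}^{p}$ are shared (embedding) parameters, $U\in\mathbb{R}^{q}$ are pretraining-specific parameters and $\Theta\in\mathbb{R}^{s}$ are finetuning-specific parameters. Define $$G(W,U)=\frac{1}{m}\sum_{z\in\mathcal{Z}}g(z,W,U),\qquad F(W,\Theta)=\frac{1}{n}\sum_{x\in\mathcal{X}}f(x,W,\Theta),$$ $$(W^*,U^* )=\arg\min_{W,U}G(W,U),\qquad \Theta^*=\arg\min_{\Theta}F(W^*,\Theta).$$ For a pretraining example $z$ and a scalar $\epsilon$, define the perturbed solutions $$(\hat W_\epsilon,\hat U_\epsilon)=\arg\min_{W,U}\big\{G(W,U)+\epsilon\, g(z,W,U)\big\},\qquad \hat\Theta_\epsilon=\arg\min_{\Theta}F(\hat W_\epsilon,\Theta),$$ so that $\hat W_0=W^*$, $\hat U_0=U^*$, $\hat\Theta_0=\Theta^*$ (i.e. $W$ is kept fixed during finetuning). Then $$I_{z,W}:=\frac{\partial \hat W_\epsilon}{\partial\epsilon}\Big|_{\epsilon=0}=-\left[\Big(\frac{\partial^2 G(W^*,U^* )}{\partial (W,U)^2}\Big)^{-1}\frac{\partial g(z,W^*,U^* )}{\partial (W,U)}\right]_W$$ and $$I_{z,\Theta}:=\frac{\partial \hat \Theta_\epsilon}{\partial\epsilon}\Big|_{\epsilon=0}=\Big(\frac{\partial^2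 F(W^*,\Theta^* )}{\partial \Theta^2}\Big)^{-1}\frac{\partial^2 F(W^*,\Theta^* )}{\partial \Theta\,\partial W}\left[\Big(\frac{\partial^2 G(W^*,U^* )}{\partial (W,U)^2}\Big)^{-1}\frac{\partial g(z,W^*,U^* )}{\partial (W,U)}\right]_W .$$
   Context: $\frac{\partial}{\partial(W,U)}$ denotes the gradient with respect to the concatenated parameter vector $[W,U]\in\mathbb{R}^{p+q}$, and $\frac{\partial^2 G}{\partial (W,U)^2}$ the corresponding $(p+q)\times(p+q)$ Hessian. $\frac{\partial^2 F}{\partial\Theta^2}$ is the $s\times s$ Hessian of $F$ in $\Theta$, and $\frac{\partial^2 F}{\partial\Theta\,\partial W}$ is the $s\times p$ matrix of mixed second partial derivatives (the Jacobian with respect to $W$ of $\nabla_\Theta F$). For a vector $v\in\mathbb{R}^{p+q}$, $[v]_W\in\mathbb{R}^p$ denotes its $W$-part (first $p$ coordinates). It is assumed that $g$ and $f$ are twice continuously differentiable, the minimizers above are well defined and depend differentiably on $\epsilon$ near $0$, and the Hessians $\frac{\partial^2 G(W^*,U^* )}{\partial (W,U)^2}$ and $\frac{\partial^2 F(W^*,\Theta^* )}{\partial\Theta^2}$ are invertible. *)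

theory Defs
  imports "HOL-Analysis.Analysis"
begin

definition grad :: "(real^'n \<Rightarrow> real) \<Rightarrow> real^'n \<Rightarrow> real^'n" where
  "grad h x = (\<chi> i. frechet_derivative h (at x) (axis i 1))"

definition hess :: "(real^'n \<Rightarrow> real) \<Rightarrow> real^'n \<Rightarrow> real^'n^'n" where
  "hess h x = jacobian (grad h) (at x)"

definition C2 :: "(real^'n \<Rightarrow> real) \<Rightarrow> bool" where
  "C2 h \<longleftrightarrow> (\<forall>x. h differentiable (at x)) \<and> (\<forall>x. grad h differentiable (at x))
     \<and> continuous_on UNIV (hess h)"

text \<open>Concatenation of parameter vectors [A,B] in R^(a+b), indexed by the sum type,
  and the projection to the first block ([v]_W).\<close>
definition concat :: "real^('a::finite) \<Rightarrow> real^('b::finite) \<Rightarrow> real^('a + 'b)" where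
  "concat A B = (\<chi> i. case i of Inl a \<Rightarrow> A $ a | Inr b \<Rightarrow> B $ b)"

definition fstpart :: "real^('a::finite + 'b::finite) \<Rightarrow> real^'a" where
  "fstpart v = (\<chi> a. v $ Inl a)"

definition sndpart :: "real^('a::finite + 'b::finite) \<Rightarrow> real^'b" where
  "sndpart v = (\<chi> b. v $ Inr b)"

definition argmin_set :: "('a \<Rightarrow> real) \<Rightarrow> 'a set" where
  "argmin_set \<phi> = {x. \<forall>y. \<phi> x \<le> \<phi> y}"

definition avg_loss :: "'d set \<Rightarrow> ('d \<Rightarrow> 'a \<Rightarrow> 'b \<Rightarrow> real) \<Rightarrow> 'a \<Rightarrow> 'b \<Rightarrow> real" where
  "avg_loss D l A B = (1 / real (card D)) * (\<Sum>d\<in>D. l d A B)"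

end

theory Submission
  imports Defs
begin


lemma fstpart_concat[simp]: "fstpart (concat a b) = a"
  by (simp add: fstpart_def concat_def vec_eq_iff)
lemma sndpart_concat[simp]: "sndpart (concat a b) = b"
  by (simp add: sndpart_def concat_def vec_eq_iff)
lemma concat_parts[simp]: "concat (fstpart v) (sndpart v) = v"
  by (simp add: fstpart_def sndpart_def concat_def vec_eq_iff split: sum.split)

lemma bl_concat: "bounded_linear (\<lambda>p::(real^'a::finite) \<times> (real^'b::finite). concat (fst p) (snd p))"
  unfolding linear_conv_bounded_linear[symmetric]
  by (rule linearI) (auto simp: concat_def vec_eq_iff split: sum.split)
lemma bl_fstpart: "bounded_linear (fstpart :: real^('a::finite + 'b::finite) \<Rightarrow> real^'a)"
  unfolding linear_conv_bounded_linear[symmetric]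
  by (rule linearI) (auto simp: fstpart_def vec_eq_iff)
lemma bl_sndpart: "bounded_linear (sndpart :: real^('a::finite + 'b::finite) \<Rightarrow> real^'b)"
  unfolding linear_conv_bounded_linear[symmetric]
  by (rule linearI) (auto simp: sndpart_def vec_eq_iff)

lemma concat_add: "concat (a + b) (c + d) = concat a c + concat b d"
  by (auto simp: concat_def vec_eq_iff split: sum.split)
lemma concat_scale: "concat (r *\<^sub>R a) (r *\<^sub>R b) = r *\<^sub>R concat a b"
  by (auto simp: concat_def vec_eq_iff split: sum.split)
lemma concat_zero_axis: "concat 0 (axis i 1) = axis (Inr i) (1::real)"
  by (auto simp: concat_def vec_eq_iff axis_def split: sum.split)

lemma has_derivative_concat:
  assumes "(A has_derivative A') (at x within S)" "(B has_derivative B') (at x within S)"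
  shows "((\<lambda>x. concat (A x) (B x)) has_derivative (\<lambda>h. concat (A' h) (B' h))) (at x within S)"
  using bounded_linear.has_derivative[OF bl_concat has_derivative_Pair[OF assms]] by simp

lemma grad_of_deriv: "(h has_derivative D) (at x) \<Longrightarrow> grad h x = (\<chi> i. D (axis i 1))"
  unfolding grad_def using frechet_derivative_at by metis

lemma jacobian_apply: fixes f :: "real^'n \<Rightarrow> real^'m" shows "(f has_derivative D) (at x) \<Longrightarrow> jacobian f (at x) *v y = D y"
proof -
  assume a: "(f has_derivative D) (at x)"
  then have "f differentiable (at x)" by (auto simp: differentiable_def)
  then have "(f has_derivative (\<lambda>h. jacobian f (at x) *v h)) (at x)" by (rule jacobian_works[THEN iffD1])
  from has_derivative_unique[OF this a] show ?thesis by metis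
qed

lemma matrix_inv_left: "invertible (A::real^'n^'n) \<Longrightarrow> matrix_inv A ** A = mat 1"
  unfolding invertible_def matrix_inv_def by (rule someI2_ex) auto

lemma solve_inv: "invertible (A::real^'n^'n) \<Longrightarrow> A *v x = y \<Longrightarrow> x = matrix_inv A *v y"
  by (metis matrix_inv_left matrix_vector_mul_assoc matrix_vector_mul_lid)

lemma min_deriv_zero:
  assumes "(h has_derivative D) (at x)" "\<And>y. h x \<le> (h y::real)"
  shows "D = (\<lambda>v. 0)"
  using differential_zero_maxmin[of x UNIV h D] assms by auto

lemma grad_avg:
  fixes h :: "'d \<Rightarrow> real^'n \<Rightarrow> real"
  assumes "\<And>d. h d differentiable (at x)"
  shows "((\<lambda>v. c * (\<Sum>d\<in>D. h d v)) has_derivative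
           (\<lambda>y. c * (\<Sum>d\<in>D. frechet_derivative (h d) (at x) y))) (at x)"
    and "grad (\<lambda>v. c * (\<Sum>d\<in>D. h d v)) x = c *\<^sub>R (\<Sum>d\<in>D. grad (h d) x)"
proof -
  have hd: "\<And>d. (h d has_derivative frechet_derivative (h d) (at x)) (at x)"
    using assms frechet_derivative_works by blast
  show 1: "((\<lambda>v. c * (\<Sum>d\<in>D. h d v)) has_derivative
           (\<lambda>y. c * (\<Sum>d\<in>D. frechet_derivative (h d) (at x) y))) (at x)"
    by (intro has_derivative_mult_right has_derivative_sum hd)
  show "grad (\<lambda>v. c * (\<Sum>d\<in>D. h d v)) x = c *\<^sub>R (\<Sum>d\<in>D. grad (h d) x)"
    unfolding grad_of_deriv[OF 1] by (simp add: vec_eq_iff grad_def sum_component)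
qed

lemma mv_neg: "(A::real^'n^'m) *v (- x) = - (A *v x)"
  by (simp add: matrix_vector_mult_def vec_eq_iff sum_negf)
lemma fstpart_neg: "fstpart (- v) = - fstpart v"
  by (simp add: fstpart_def vec_eq_iff)

lemma deriv_zero_nbhd:
  fixes E :: "real \<Rightarrow> 'a::real_normed_vector"
  assumes "(E has_derivative E') (at 0)" "\<delta> > 0" "\<And>e. \<bar>e\<bar> < \<delta> \<Longrightarrow> E e = 0"
  shows "E' = (\<lambda>_. 0)"
proof -
  have "((\<lambda>_. 0) has_derivative E') (at 0)"
    by (rule has_derivative_transform_within_open[OF assms(1), of "ball 0 \<delta>"])
       (use assms in \<open>auto simp: dist_norm\<close>)
  moreover have "((\<lambda>_. (0::'a)) has_derivative (\<lambda>_. 0)) (at 0)" by simp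
  ultimately show ?thesis using has_derivative_unique by blast
qed



theorem theorem1:
  fixes Z :: "'z set" and X :: "'x set"
    and g :: "'z \<Rightarrow> real^'p \<Rightarrow> real^'q \<Rightarrow> real"
    and f :: "'x \<Rightarrow> real^'p \<Rightarrow> real^'s \<Rightarrow> real"
    and z :: 'z
    and Wst :: "real^'p" and Ust :: "real^'q" and Tst :: "real^'s"
    and What :: "real \<Rightarrow> real^'p" and Uhat :: "real \<Rightarrow> real^'q"
    and That :: "real \<Rightarrow> real^'s"
    and \<delta> :: real
  assumes finZ: "finite Z" "Z \<noteq> {}" and finX: "finite X" "X \<noteq> {}"
    and zZ: "z \<in> Z"
    and g_C2: "\<And>z'. C2 (\<lambda>v. g z' (fstpart v) (sndpart v))"
    and f_C2: "\<And>x. C2 (\<lambda>v. f x (fstpart v) (sndpart v))"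
    and opt_WU: "argmin_set (\<lambda>(W, U). avg_loss Z g W U) = {(Wst, Ust)}"
    and opt_T: "argmin_set (\<lambda>T. avg_loss X f Wst T) = {Tst}"
    and \<delta>_pos: "\<delta> > 0"
    and pert_WU: "\<And>\<epsilon>. \<bar>\<epsilon>\<bar> < \<delta> \<Longrightarrow>
        argmin_set (\<lambda>(W, U). avg_loss Z g W U + \<epsilon> * g z W U) = {(What \<epsilon>, Uhat \<epsilon>)}"
    and pert_T: "\<And>\<epsilon>. \<bar>\<epsilon>\<bar> < \<delta> \<Longrightarrow>
        argmin_set (\<lambda>T. avg_loss X f (What \<epsilon>) T) = {That \<epsilon>}"
    and diff: "What differentiable (at 0)" "Uhat differentiable (at 0)"
      "That differentiable (at 0)"
    and invG: "invertible (hess (\<lambda>v. avg_loss Z g (fstpart v) (sndpart v)) (concat Wst Ust))"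
    and invF: "invertible (hess (\<lambda>T. avg_loss X f Wst T) Tst)"
  shows "vector_derivative What (at 0) =
           - fstpart (matrix_inv (hess (\<lambda>v. avg_loss Z g (fstpart v) (sndpart v)) (concat Wst Ust))
                        *v grad (\<lambda>v. g z (fstpart v) (sndpart v)) (concat Wst Ust))
       \<and> vector_derivative That (at 0) =
           matrix_inv (hess (\<lambda>T. avg_loss X f Wst T) Tst)
             *v (jacobian (\<lambda>W. grad (\<lambda>T. avg_loss X f W T) Tst) (at Wst)
             *v fstpart (matrix_inv (hess (\<lambda>v. avg_loss Z g (fstpart v) (sndpart v)) (concat Wst Ust))
                        *v grad (\<lambda>v. g z (fstpart v) (sndpart v)) (concat Wst Ust)))"
proof -
  define c where "c = 1 / real (card Z)"
  define Gv where "Gv = (\<lambda>v. avg_loss Z g (fstpart v) (sndpart v))"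
  define gd where "gd = (\<lambda>d v. g d (fstpart v) (sndpart v))"
  have Gv_eq: "Gv = (\<lambda>v. c * (\<Sum>d\<in>Z. gd d v))"
    by (simp add: Gv_def gd_def c_def avg_loss_def)
  have gd_diff: "\<And>d x. gd d differentiable (at x)"
    using g_C2 unfolding C2_def gd_def by blast
  have ggd_diff: "\<And>d x. grad (gd d) differentiable (at x)"
    using g_C2 unfolding C2_def gd_def by blast
  have gradG: "grad Gv = (\<lambda>x. c *\<^sub>R (\<Sum>d\<in>Z. grad (gd d) x))"
    unfolding Gv_eq by (intro ext grad_avg(2) gd_diff)
  have gradG_diff: "\<And>x. grad Gv differentiable (at x)"
    unfolding gradG using ggd_diff finZ(1) by (intro differentiable_scaleR differentiable_sum) auto
  have Gv_diff: "\<And>x. Gv differentiable (at x)"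
    unfolding Gv_eq differentiable_def by (blast intro: grad_avg(1) gd_diff)
  define V where "V = (\<lambda>e. concat (What e) (Uhat e))"
  have foc1: "grad Gv (V e) + e *\<^sub>R grad (gd z) (V e) = 0" if e: "\<bar>e\<bar> < \<delta>" for e
  proof -
    define DG where "DG = frechet_derivative Gv (at (V e))"
    define Dg where "Dg = frechet_derivative (gd z) (at (V e))"
    have hG: "(Gv has_derivative DG) (at (V e))" unfolding DG_def using Gv_diff frechet_derivative_works by blast
    have hg: "(gd z has_derivative Dg) (at (V e))" unfolding Dg_def using gd_diff frechet_derivative_works by blast
    have hP: "((\<lambda>v. Gv v + e * gd z v) has_derivative (\<lambda>y. DG y + e * Dg y)) (at (V e))"
      by (intro has_derivative_add has_derivative_mult_right hG hg)
    have mn: "(\<lambda>(W, U). avg_loss Z g W U + e * g z W U) (What e, Uhat e) \<le> (\<lambda>(W, U). avg_loss Z g W U + e * g z W U) y" for y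
      using pert_WU[OF e] unfolding argmin_set_def by blast
    have "Gv (V e) + e * gd z (V e) \<le> Gv v + e * gd z v" for v
      using mn[of "(fstpart v, sndpart v)"] by (simp add: Gv_def gd_def V_def)
    from min_deriv_zero[OF hP this] have z0: "\<And>y. DG y + e * Dg y = 0" by metis
    show ?thesis unfolding vec_eq_iff using z0 by (simp add: grad_def DG_def Dg_def)
  qed
  have W0: "What 0 = Wst" and U0: "Uhat 0 = Ust"
    using pert_WU[of 0] opt_WU \<delta>_pos by auto
  define W' where "W' = vector_derivative What (at 0)"
  define U' where "U' = vector_derivative Uhat (at 0)"
  define T' where "T' = vector_derivative That (at 0)"
  have hW: "(What has_derivative (\<lambda>t. t *\<^sub>R W')) (at 0)"
    using diff(1) unfolding W'_def vector_derivative_works has_vector_derivative_def .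
  have hU: "(Uhat has_derivative (\<lambda>t. t *\<^sub>R U')) (at 0)"
    using diff(2) unfolding U'_def vector_derivative_works has_vector_derivative_def .
  have hT: "(That has_derivative (\<lambda>t. t *\<^sub>R T')) (at 0)"
    using diff(3) unfolding T'_def vector_derivative_works has_vector_derivative_def .
  have hV: "(V has_derivative (\<lambda>t. t *\<^sub>R concat W' U')) (at 0)"
    using has_derivative_concat[OF hW hU] unfolding V_def concat_scale .
  have V0: "V 0 = concat Wst Ust" by (simp add: V_def W0 U0)
  define HG where "HG = hess Gv (concat Wst Ust)"
  define DK where "DK = frechet_derivative (grad Gv) (at (concat Wst Ust))"
  have hK: "(grad Gv has_derivative DK) (at (concat Wst Ust))"
    unfolding DK_def using gradG_diff frechet_derivative_works by blast
  have DK_HG: "\<And>y. DK y = HG *v y" unfolding HG_def hess_def using jacobian_apply[OF hK] by simp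
  define Dz where "Dz = frechet_derivative (grad (gd z)) (at (V 0))"
  have hz: "(grad (gd z) has_derivative Dz) (at (V 0))"
    unfolding Dz_def using ggd_diff frechet_derivative_works by blast
  have hE: "((\<lambda>e. grad Gv (V e) + e *\<^sub>R grad (gd z) (V e)) has_derivative
      (\<lambda>t. DK (t *\<^sub>R concat W' U') + (0 *\<^sub>R Dz (t *\<^sub>R concat W' U') + t *\<^sub>R grad (gd z) (V 0)))) (at 0)"
    apply (intro has_derivative_add has_derivative_scaleR has_derivative_ident)
     apply (rule has_derivative_compose[OF hV]) using hK V0 apply simp
    apply (rule has_derivative_compose[OF hV hz])
    done
  from fun_cong[OF deriv_zero_nbhd[OF hE \<delta>_pos foc1], of 1]
  have "HG *v concat W' U' = - grad (gd z) (concat Wst Ust)"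
    by (simp add: DK_HG V0 eq_neg_iff_add_eq_0)
  from solve_inv[OF invG[folded Gv_def HG_def] this]
  have V': "concat W' U' = matrix_inv HG *v (- grad (gd z) (concat Wst Ust))" .
  have W'eq: "W' = - fstpart (matrix_inv HG *v grad (gd z) (concat Wst Ust))"
  proof -
    have "W' = fstpart (concat W' U')" by simp
    also have "\<dots> = fstpart (- (matrix_inv HG *v grad (gd z) (concat Wst Ust)))"
      unfolding V' by (simp only: mv_neg)
    finally show ?thesis by (simp only: fstpart_neg)
  qed
  define c' where "c' = 1 / real (card X)"
  define Fv where "Fv = (\<lambda>v. avg_loss X f (fstpart v) (sndpart v))"
  define fd where "fd = (\<lambda>d v. f d (fstpart v) (sndpart v))"
  have Fv_eq: "Fv = (\<lambda>v. c' * (\<Sum>d\<in>X. fd d v))"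
    by (simp add: Fv_def fd_def c'_def avg_loss_def)
  have fd_diff: "\<And>d x. fd d differentiable (at x)"
    using f_C2 unfolding C2_def fd_def by blast
  have gfd_diff: "\<And>d x. grad (fd d) differentiable (at x)"
    using f_C2 unfolding C2_def fd_def by blast
  have gradF: "grad Fv = (\<lambda>x. c' *\<^sub>R (\<Sum>d\<in>X. grad (fd d) x))"
    unfolding Fv_eq by (intro ext grad_avg(2) fd_diff)
  have gradF_diff: "\<And>x. grad Fv differentiable (at x)"
    unfolding gradF using gfd_diff finX(1) by (intro differentiable_scaleR differentiable_sum) auto
  have Fv_diff: "\<And>x. Fv differentiable (at x)"
    unfolding Fv_eq differentiable_def by (blast intro: grad_avg(1) fd_diff)
  have Fsec: "(\<lambda>T. avg_loss X f W T) = (\<lambda>T. Fv (concat W T))" for W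
    by (simp add: Fv_def)
  have hcat2: "((\<lambda>T. concat W T) has_derivative (\<lambda>h. concat 0 h)) (at T)" for W :: "real^'p" and T :: "real^'s"
    by (rule has_derivative_eq_rhs[OF has_derivative_concat[OF has_derivative_const has_derivative_ident]]) simp
  have hcat1: "((\<lambda>W. concat W T) has_derivative (\<lambda>h. concat h 0)) (at W)" for W :: "real^'p" and T :: "real^'s"
    by (rule has_derivative_eq_rhs[OF has_derivative_concat[OF has_derivative_ident has_derivative_const]]) simp
  have hFsec: "((\<lambda>T. avg_loss X f W T) has_derivative
       (\<lambda>h. frechet_derivative Fv (at (concat W T)) (concat 0 h))) (at T)" for W T
    unfolding Fsec
    by (rule has_derivative_compose[OF hcat2]) (use Fv_diff frechet_derivative_works in blast)
  have gradT: "grad (\<lambda>T. avg_loss X f W T) T = sndpart (grad Fv (concat W T))" for W T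
    unfolding grad_of_deriv[OF hFsec]
    by (simp add: concat_zero_axis sndpart_def grad_def)
  define K where "K = grad Fv"
  define DKF where "DKF = frechet_derivative K (at (concat Wst Tst))"
  have hKF: "(K has_derivative DKF) (at (concat Wst Tst))"
    unfolding DKF_def K_def using gradF_diff frechet_derivative_works by blast
  have blD: "bounded_linear DKF" using hKF has_derivative_bounded_linear by blast
  define J where "J = jacobian (\<lambda>W. grad (\<lambda>T. avg_loss X f W T) Tst) (at Wst)"
  define HF where "HF = hess (\<lambda>T. avg_loss X f Wst T) Tst"
  have J_eq: "J *v h = sndpart (DKF (concat h 0))" for h
  proof -
    have "((\<lambda>W. sndpart (K (concat W Tst))) has_derivative (\<lambda>h. sndpart (DKF (concat h 0)))) (at Wst)"
      by (rule bounded_linear.has_derivative[OF bl_sndpart], rule has_derivative_compose[OF hcat1 hKF])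
    then show ?thesis unfolding J_def gradT K_def by (rule jacobian_apply)
  qed
  have HF_eq: "HF *v h = sndpart (DKF (concat 0 h))" for h
  proof -
    have "((\<lambda>T. sndpart (K (concat Wst T))) has_derivative (\<lambda>h. sndpart (DKF (concat 0 h)))) (at Tst)"
      by (rule bounded_linear.has_derivative[OF bl_sndpart], rule has_derivative_compose[OF hcat2 hKF])
    moreover have "grad (\<lambda>T. avg_loss X f Wst T) = (\<lambda>T. sndpart (K (concat Wst T)))"
      using gradT K_def by blast
    ultimately show ?thesis unfolding HF_def hess_def by (simp add: jacobian_apply)
  qed
  have T0: "That 0 = Tst"
    using pert_T[of 0] opt_T \<delta>_pos W0 by auto
  have foc2: "sndpart (K (concat (What e) (That e))) = 0" if e: "\<bar>e\<bar> < \<delta>" for e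
  proof -
    have "\<forall>y. avg_loss X f (What e) (That e) \<le> avg_loss X f (What e) y"
      using pert_T[OF e] unfolding argmin_set_def by blast
    from min_deriv_zero[OF hFsec[of "What e" "That e"]] this
    have "(\<lambda>h. frechet_derivative Fv (at (concat (What e) (That e))) (concat 0 h)) = (\<lambda>_. 0)" by blast
    then have "grad (\<lambda>T. avg_loss X f (What e) T) (That e) = 0"
      unfolding grad_of_deriv[OF hFsec] by (simp add: vec_eq_iff fun_eq_iff)
    then show ?thesis using gradT K_def by simp
  qed
  have hE2: "((\<lambda>e. sndpart (K (concat (What e) (That e)))) has_derivative
       (\<lambda>t. sndpart (DKF (t *\<^sub>R concat W' T')))) (at 0)"
    apply (rule bounded_linear.has_derivative[OF bl_sndpart])
    apply (rule has_derivative_compose[OF has_derivative_concat[OF hW hT, unfolded concat_scale]])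
    using hKF W0 T0 by simp
  from fun_cong[OF deriv_zero_nbhd[OF hE2 \<delta>_pos foc2], of 1]
  have "sndpart (DKF (concat W' T')) = 0" by simp
  moreover have "concat W' T' = concat W' 0 + concat 0 T'" using concat_add[of W' 0 0 T'] by simp
  ultimately have "J *v W' + HF *v T' = 0"
    unfolding J_eq HF_eq
    using linear_add[OF bounded_linear.linear[OF blD]] linear_add[OF bounded_linear.linear[OF bl_sndpart]] by metis
  then have "HF *v T' = J *v fstpart (matrix_inv HG *v grad (gd z) (concat Wst Ust))"
    unfolding W'eq by (simp add: matrix_vector_mult_def vec_eq_iff sum_negf eq_neg_iff_add_eq_0 add.commute)
  from solve_inv[OF invF[folded HF_def] this]
  have T'eq: "T' = matrix_inv HF *v (J *v fstpart (matrix_inv HG *v grad (gd z) (concat Wst Ust)))" .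
  show ?thesis
    using W'eq T'eq unfolding W'_def T'_def HG_def HF_def J_def Gv_def gd_def by (rule conjI)
qed

end
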